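(* Let $k\ge3$. Let $G=(V,E)$ be a $(k-2)$-connected $k$-colorable chordal graph and let $T$ be a clique of $G$ with $T\ne V$, such that $(G,T)$ can be obtained from $(G-v,T\setminus\{v\})$ using an introduce operation. If $\mathcal{C}^c_k(G-v,T\setminus\{v\})$ is a $(k-2,k)$-color-complete graph, then $\mathcal{C}^c_k(G,T)$ is a $(k-1,k)$-color-complete graph. If $|T|=k$ or $\mathcal{C}^c_k(G-v,T\setminus\{v\})$ is a forest that satisfies the injective neighborhood property, then $\mathcal{C}^c_k(G,T)$ is a forest that satisfies the injective neighborhood property.
   Context: A chordal graph has no induced cycle of length $>3$; for $\ell\ge1$, $G$ is $\ell$-connected if $|V(G)|\ge\ell+1$ and every vertex cut has at least $\ell$ vertices. $(G,T)$ (a graph with $T\subseteq V(G)$) is obtained from $(G-v,T\setminus\{v\})$ by introducing $v$ if $T\ne V(G)$, $v\in T$ and $N(v)\subseteq T$. A $k$-coloring of $G$ is a map $\alpha:V(G)\to\{1,\dots,k\}$ with $\alpha(u)\ne\alpha(w)$ for all edges $uw$. $\mathcal{C}_k(G)$ has the $k$-colorings as nodes, adjacent iff they differ on exactly one vertex. For $T\subseteq V(G)$, label each coloring $\gamma$ by $\gamma|_T$. A label component is a maximal set of colorings with the same label inducing a connected subgraph of $\mathcal{C}_k(G)$. The contracted solution graph $\mathcal{C}^c_k(G,T)=(H,\ell)$ has one node $x$ per label component $S_x$, distinct $x,y$ adjacent iff some $\gamma\in S_x,\gamma'\in S_y$ are adjacent in $\mathcal{C}_k(G)$, and $\ell(x)$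 the common label on $S_x$. For $1\le m\le k$, a labeled graph $(H,\ell)$ is $(m,k)$-color-complete if there is a set $T$ with $|T|=m$ such that every label is a $k$-coloring of the complete graph on $T$, every such $k$-coloring is the label of exactly one node, and two nodes are adjacent iff their labels differ on exactly one element of $T$. $(H,\ell)$ satisfies the injective neighborhood property if any two distinct neighbors of any node have distinct labels. *)

theory Defs
  imports Main
begin

definition sgraph :: "'a set \<Rightarrow> 'a set set \<Rightarrow> bool" where
  "sgraph V E \<longleftrightarrow> finite V \<and> (\<forall>e\<in>E. \<exists>u w. e = {u, w} \<and> u \<noteq> w \<and> u \<in> V \<and> w \<in> V)"

definition adj :: "'a set set \<Rightarrow> 'a \<Rightarrow> 'a \<Rightarrow> bool" where
  "adj E u w \<longleftrightarrow> {u, w} \<in> E"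

definition neighbors :: "'a set \<Rightarrow> 'a set set \<Rightarrow> 'a \<Rightarrow> 'a set" where
  "neighbors V E v = {w \<in> V. adj E v w}"

definition is_clique :: "'a set \<Rightarrow> 'a set set \<Rightarrow> 'a set \<Rightarrow> bool" where
  "is_clique V E T \<longleftrightarrow> T \<subseteq> V \<and> (\<forall>u\<in>T. \<forall>w\<in>T. u \<noteq> w \<longrightarrow> adj E u w)"

definition connected_on :: "'a set set \<Rightarrow> 'a set \<Rightarrow> bool" where
  "connected_on E W \<longleftrightarrow>
     (\<forall>u\<in>W. \<forall>w\<in>W. (\<lambda>x y. x \<in> W \<and> y \<in> W \<and> adj E x y)\<^sup>*\<^sup>* u w)"

definition vertex_cut :: "'a set \<Rightarrow> 'a set set \<Rightarrow> 'a set \<Rightarrow> bool" where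
  "vertex_cut V E S \<longleftrightarrow> S \<subseteq> V \<and> \<not> connected_on E (V - S)"

definition l_connected :: "nat \<Rightarrow> 'a set \<Rightarrow> 'a set set \<Rightarrow> bool" where
  "l_connected l V E \<longleftrightarrow> card V \<ge> l + 1 \<and> (\<forall>S. vertex_cut V E S \<longrightarrow> card S \<ge> l)"

definition chordal :: "'a set \<Rightarrow> 'a set set \<Rightarrow> bool" where
  "chordal V E \<longleftrightarrow> \<not> (\<exists>cs. distinct cs \<and> length cs \<ge> 4 \<and> set cs \<subseteq> V \<and>
      (\<forall>i<length cs. \<forall>j<length cs.
          adj E (cs ! i) (cs ! j) \<longleftrightarrow> (j = Suc i mod length cs \<or> i = Suc j mod length cs)))"

definition coloring :: "nat \<Rightarrow> 'a set \<Rightarrow> 'a set set \<Rightarrow> ('a \<Rightarrow> nat) \<Rightarrow> bool" where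
  "coloring k V E \<alpha> \<longleftrightarrow> (\<forall>v\<in>V. \<alpha> v \<in> {1..k}) \<and> (\<forall>v. v \<notin> V \<longrightarrow> \<alpha> v = 0) \<and>
      (\<forall>u\<in>V. \<forall>w\<in>V. adj E u w \<longrightarrow> \<alpha> u \<noteq> \<alpha> w)"

definition colorable :: "nat \<Rightarrow> 'a set \<Rightarrow> 'a set set \<Rightarrow> bool" where
  "colorable k V E \<longleftrightarrow> (\<exists>\<alpha>. coloring k V E \<alpha>)"

definition col_adj :: "'a set \<Rightarrow> ('a \<Rightarrow> nat) \<Rightarrow> ('a \<Rightarrow> nat) \<Rightarrow> bool" where
  "col_adj V \<alpha> \<beta> \<longleftrightarrow> card {v \<in> V. \<alpha> v \<noteq> \<beta> v} = 1"

definition label :: "'a set \<Rightarrow> ('a \<Rightarrow> nat) \<Rightarrow> ('a \<Rightarrow> nat)" where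
  "label T \<gamma> = (\<lambda>v. if v \<in> T then \<gamma> v else 0)"

definition same_label_connected ::
  "nat \<Rightarrow> 'a set \<Rightarrow> 'a set set \<Rightarrow> 'a set \<Rightarrow> ('a \<Rightarrow> nat) set \<Rightarrow> bool" where
  "same_label_connected k V E T S \<longleftrightarrow>
     S \<noteq> {} \<and> S \<subseteq> {\<alpha>. coloring k V E \<alpha>} \<and>
     (\<forall>\<gamma>\<in>S. \<forall>\<gamma>'\<in>S. label T \<gamma> = label T \<gamma>') \<and>
     (\<forall>\<gamma>\<in>S. \<forall>\<gamma>'\<in>S. (\<lambda>a b. a \<in> S \<and> b \<in> S \<and> col_adj V a b)\<^sup>*\<^sup>* \<gamma> \<gamma>')"

definition label_component ::
  "nat \<Rightarrow> 'a set \<Rightarrow> 'a set set \<Rightarrow> 'a set \<Rightarrow> ('a \<Rightarrow> nat) set \<Rightarrow> bool" where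
  "label_component k V E T S \<longleftrightarrow> same_label_connected k V E T S \<and>
     (\<forall>S'. S \<subseteq> S' \<and> same_label_connected k V E T S' \<longrightarrow> S' = S)"

definition csg_nodes :: "nat \<Rightarrow> 'a set \<Rightarrow> 'a set set \<Rightarrow> 'a set \<Rightarrow> ('a \<Rightarrow> nat) set set" where
  "csg_nodes k V E T = {S. label_component k V E T S}"

definition csg_adj :: "'a set \<Rightarrow> ('a \<Rightarrow> nat) set \<Rightarrow> ('a \<Rightarrow> nat) set \<Rightarrow> bool" where
  "csg_adj V S S' \<longleftrightarrow> S \<noteq> S' \<and> (\<exists>\<gamma>\<in>S. \<exists>\<gamma>'\<in>S'. col_adj V \<gamma> \<gamma>')"

definition csg_label :: "'a set \<Rightarrow> ('a \<Rightarrow> nat) set \<Rightarrow> ('a \<Rightarrow> nat)" where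
  "csg_label T S = label T (SOME \<gamma>. \<gamma> \<in> S)"

definition complete_edges :: "'a set \<Rightarrow> 'a set set" where
  "complete_edges T = {{u, w} | u w. u \<in> T \<and> w \<in> T \<and> u \<noteq> w}"

definition color_complete ::
  "nat \<Rightarrow> nat \<Rightarrow> 'n set \<Rightarrow> ('n \<Rightarrow> 'n \<Rightarrow> bool) \<Rightarrow> ('n \<Rightarrow> 'a \<Rightarrow> nat) \<Rightarrow> bool" where
  "color_complete m k N A lab \<longleftrightarrow> (\<exists>T. finite T \<and> card T = m \<and>
     (\<forall>x\<in>N. coloring k T (complete_edges T) (lab x)) \<and>
     (\<forall>\<beta>. coloring k T (complete_edges T) \<beta> \<longrightarrow> (\<exists>!x. x \<in> N \<and> lab x = \<beta>)) \<and>
     (\<forall>x\<in>N. \<forall>y\<in>N. A x y \<longleftrightarrow> card {t \<in> T. lab x t \<noteq> lab y t} = 1))"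

definition forest :: "'n set \<Rightarrow> ('n \<Rightarrow> 'n \<Rightarrow> bool) \<Rightarrow> bool" where
  "forest N A \<longleftrightarrow> \<not> (\<exists>cs. distinct cs \<and> length cs \<ge> 3 \<and> set cs \<subseteq> N \<and>
      (\<forall>i<length cs. A (cs ! i) (cs ! (Suc i mod length cs))))"

definition inj_nbhd :: "'n set \<Rightarrow> ('n \<Rightarrow> 'n \<Rightarrow> bool) \<Rightarrow> ('n \<Rightarrow> 'b) \<Rightarrow> bool" where
  "inj_nbhd N A lab \<longleftrightarrow>
     (\<forall>x\<in>N. \<forall>y\<in>N. \<forall>z\<in>N. A x y \<and> A x z \<and> y \<noteq> z \<longrightarrow> lab y \<noteq> lab z)"

definition introduces :: "'a set \<Rightarrow> 'a set set \<Rightarrow> 'a set \<Rightarrow> 'a \<Rightarrow> bool" where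
  "introduces V E T v \<longleftrightarrow> T \<noteq> V \<and> v \<in> T \<and> neighbors V E v \<subseteq> T"

end

theory Submission
  imports Defs
begin



definition stp :: "nat \<Rightarrow> 'a set \<Rightarrow> 'a set set \<Rightarrow> 'a set \<Rightarrow> ('a \<Rightarrow> nat) \<Rightarrow> ('a \<Rightarrow> nat) \<Rightarrow> bool" where
  "stp k V E T a b \<longleftrightarrow> coloring k V E a \<and> coloring k V E b \<and> label T a = label T b \<and> col_adj V a b"

definition cls :: "nat \<Rightarrow> 'a set \<Rightarrow> 'a set set \<Rightarrow> 'a set \<Rightarrow> ('a \<Rightarrow> nat) \<Rightarrow> ('a \<Rightarrow> nat) set" where
  "cls k V E T a = {b. (stp k V E T)\<^sup>*\<^sup>* a b}"

lemma col_adj_sym: "col_adj V a b = col_adj V b a"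
proof -
  have "{v\<in>V. a v \<noteq> b v} = {v\<in>V. b v \<noteq> a v}" by auto
  then show ?thesis unfolding col_adj_def by simp
qed

lemma stp_sym: "stp k V E T a b \<Longrightarrow> stp k V E T b a"
  unfolding stp_def using col_adj_sym by auto

lemma stp_rtr_sym: "(stp k V E T)\<^sup>*\<^sup>* a b \<Longrightarrow> (stp k V E T)\<^sup>*\<^sup>* b a"
  by (induction rule: rtranclp_induct) (auto intro: converse_rtranclp_into_rtranclp stp_sym)

lemma stp_rtr_col: "(stp k V E T)\<^sup>*\<^sup>* a b \<Longrightarrow> coloring k V E a \<Longrightarrow> coloring k V E b \<and> label T a = label T b"
  by (induction rule: rtranclp_induct) (auto simp: stp_def)

lemma cls_self: "a \<in> cls k V E T a" by (simp add: cls_def)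

lemma cls_mem: "b \<in> cls k V E T a \<Longrightarrow> coloring k V E a \<Longrightarrow> coloring k V E b \<and> label T b = label T a"
  unfolding cls_def using stp_rtr_col by fastforce

lemma cls_eq: "b \<in> cls k V E T a \<Longrightarrow> cls k V E T b = cls k V E T a"
proof -
  assume "b \<in> cls k V E T a"
  then have ab: "(stp k V E T)\<^sup>*\<^sup>* a b" by (simp add: cls_def)
  then have ba: "(stp k V E T)\<^sup>*\<^sup>* b a" by (rule stp_rtr_sym)
  show ?thesis unfolding cls_def using ab ba rtranclp_trans[of "stp k V E T"] by blast
qed

lemma cls_eq_stp: "stp k V E T a b \<Longrightarrow> cls k V E T b = cls k V E T a"
  by (rule cls_eq) (simp add: cls_def)

lemma slc_cls:
  assumes ca: "coloring k V E a"
  shows "same_label_connected k V E T (cls k V E T a)"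
proof -
  let ?S = "cls k V E T a"
  let ?R = "\<lambda>x y. x \<in> ?S \<and> y \<in> ?S \<and> col_adj V x y"
  have symR: "?R x y \<Longrightarrow> ?R y x" for x y using col_adj_sym[of V x y] by blast
  have reach: "?R\<^sup>*\<^sup>* a b" if "(stp k V E T)\<^sup>*\<^sup>* a b" for b
    using that
  proof (induction rule: rtranclp_induct)
    case base then show ?case by simp
  next
    case (step y z)
    have yS: "y \<in> ?S" using step(1) by (simp add: cls_def)
    have zS: "z \<in> ?S" using step(1,2) unfolding cls_def by (simp add: rtranclp.rtrancl_into_rtrancl)
    have "col_adj V y z" using step(2) by (simp add: stp_def)
    then have "?R y z" using yS zS by simp
    then show ?case using step(3) by (simp add: rtranclp.rtrancl_into_rtrancl)
  qed
  have rsym: "?R\<^sup>*\<^sup>* x y \<Longrightarrow> ?R\<^sup>*\<^sup>* y x" for x y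
  proof (induction rule: rtranclp_induct)
    case base then show ?case by simp
  next
    case (step y z)
    then have "?R z y" using symR by blast
    then show ?case using step(3) by (rule converse_rtranclp_into_rtranclp)
  qed
  have col: "g \<in> ?S \<Longrightarrow> coloring k V E g \<and> label T g = label T a" for g
    using cls_mem[OF _ ca] by blast
  show ?thesis unfolding same_label_connected_def
  proof (intro conjI ballI)
    show "?S \<noteq> {}" using cls_self by blast
    show "?S \<subseteq> {\<alpha>. coloring k V E \<alpha>}" using col by blast
  next
    fix g g' assume "g \<in> ?S" "g' \<in> ?S"
    then show "label T g = label T g'" using col by simp
  next
    fix g g' assume "g \<in> ?S" "g' \<in> ?S"
    then have r1: "?R\<^sup>*\<^sup>* a g" and r2: "?R\<^sup>*\<^sup>* a g'" using reach by (auto simp: cls_def)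
    have r3: "?R\<^sup>*\<^sup>* g a" by (rule rsym[OF r1])
    show "?R\<^sup>*\<^sup>* g g'" by (rule rtranclp_trans[OF r3 r2])
  qed
qed

lemma slc_sub:
  assumes "same_label_connected k V E T S" "a \<in> S"
  shows "S \<subseteq> cls k V E T a"
proof
  fix b assume "b \<in> S"
  let ?R = "\<lambda>x y. x \<in> S \<and> y \<in> S \<and> col_adj V x y"
  have "?R\<^sup>*\<^sup>* a b" using assms \<open>b \<in> S\<close> unfolding same_label_connected_def by blast
  then have "(stp k V E T)\<^sup>*\<^sup>* a b"
  proof (induction rule: rtranclp_induct)
    case base then show ?case by simp
  next
    case (step y z)
    then have "stp k V E T y z" using assms(1) unfolding same_label_connected_def stp_def by blast
    then show ?case using step by (meson rtranclp.rtrancl_into_rtrancl)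
  qed
  then show "b \<in> cls k V E T a" by (simp add: cls_def)
qed

lemma lc_iff: "label_component k V E T S \<longleftrightarrow> (\<exists>a. coloring k V E a \<and> S = cls k V E T a)"
proof
  assume lc: "label_component k V E T S"
  then have slc: "same_label_connected k V E T S" by (simp add: label_component_def)
  then obtain a where a: "a \<in> S" unfolding same_label_connected_def by blast
  then have ca: "coloring k V E a" using slc unfolding same_label_connected_def by blast
  have "S \<subseteq> cls k V E T a" using slc_sub[OF slc a] .
  then have "cls k V E T a = S" using lc slc_cls[OF ca] unfolding label_component_def by blast
  then show "\<exists>a. coloring k V E a \<and> S = cls k V E T a" using ca by blast
next
  assume "\<exists>a. coloring k V E a \<and> S = cls k V E T a"
  then obtain a where ca: "coloring k V E a" and S: "S = cls k V E T a" by blast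
  show "label_component k V E T S" unfolding label_component_def
  proof (intro conjI allI impI)
    show "same_label_connected k V E T S" using slc_cls[OF ca] S by simp
    fix S' assume "S \<subseteq> S' \<and> same_label_connected k V E T S'"
    then have "S' \<subseteq> cls k V E T a" using slc_sub cls_self S by blast
    then show "S' = S" using \<open>S \<subseteq> S' \<and> _\<close> S by blast
  qed
qed

lemma nodes_eq: "csg_nodes k V E T = {cls k V E T a | a. coloring k V E a}"
  unfolding csg_nodes_def lc_iff by blast

lemma csg_label_cls: "coloring k V E a \<Longrightarrow> csg_label T (cls k V E T a) = label T a"
proof -
  assume ca: "coloring k V E a"
  have "(SOME g. g \<in> cls k V E T a) \<in> cls k V E T a" by (rule someI[of "\<lambda>g. g \<in> cls k V E T a", OF cls_self])
  then show ?thesis unfolding csg_label_def using cls_mem[OF _ ca] by blast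
qed

definition deg2 :: "('n \<Rightarrow> 'n \<Rightarrow> bool) \<Rightarrow> 'n set \<Rightarrow> bool" where
  "deg2 A C \<longleftrightarrow> (\<forall>x\<in>C. \<exists>y z. y \<in> C \<and> z \<in> C \<and> y \<noteq> z \<and> A x y \<and> A x z)"

lemma cycle_deg2:
  assumes sym: "\<And>x y. A x y \<Longrightarrow> A y x"
    and cyc: "distinct cs" "length cs \<ge> 3" "\<forall>i<length cs. A (cs ! i) (cs ! (Suc i mod length cs))"
  shows "deg2 A (set cs)"
  unfolding deg2_def
proof
  fix x assume "x \<in> set cs"
  then obtain i where i: "i < length cs" "cs ! i = x" by (auto simp: in_set_conv_nth)
  let ?n = "length cs"
  let ?j = "(i + ?n - 1) mod ?n"
  have n0: "0 < ?n" using cyc by auto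
  have j: "?j < ?n" using n0 by (rule mod_less_divisor)
  have sj: "Suc ?j mod ?n = i"
  proof -
    have "Suc ?j mod ?n = Suc (i + ?n - 1) mod ?n" by (simp add: mod_Suc_eq)
    also have "Suc (i + ?n - 1) = i + ?n" using cyc by auto
    finally show ?thesis using i by simp
  qed
  have "A (cs ! ?j) (cs ! (Suc ?j mod ?n))" using cyc(3) j by blast
  then have "A (cs ! ?j) x" using sj i by simp
  then have a1: "A x (cs ! ?j)" using sym by blast
  have a2: "A x (cs ! (Suc i mod ?n))" using cyc(3) i by blast
  have ne: "?j \<noteq> Suc i mod ?n"
  proof
    assume eq: "?j = Suc i mod ?n"
    then have "Suc (Suc i mod ?n) mod ?n = i" using sj by simp
    then have "(i + 2) mod ?n = i" by (simp add: mod_Suc_eq)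
    then show False using cyc(2) i(1)
    proof (cases "i + 2 < ?n")
      case True then show ?thesis using \<open>(i + 2) mod ?n = i\<close> by simp
    next
      case False
      have "i + 2 - ?n < ?n" using i(1) cyc(2) by linarith
      then have "(i + 2) mod ?n = i + 2 - ?n" using False by (simp add: mod_if)
      then show ?thesis using \<open>(i + 2) mod ?n = i\<close> False i(1) cyc(2) by linarith
    qed
  qed
  have si: "Suc i mod ?n < ?n" using n0 by (rule mod_less_divisor)
  have "cs ! ?j \<noteq> cs ! (Suc i mod ?n)" using ne cyc(1) j si nth_eq_iff_index_eq by blast
  moreover have "cs ! ?j \<in> set cs" "cs ! (Suc i mod ?n) \<in> set cs" using j si by auto
  ultimately show "\<exists>y z. y \<in> set cs \<and> z \<in> set cs \<and> y \<noteq> z \<and> A x y \<and> A x z"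
    using a1 a2 by blast
qed




lemma deg2_not_forest:
  assumes sym: "\<And>x y. A x y \<Longrightarrow> A y x" and irr: "\<And>x. \<not> A x x"
    and fin: "finite C" and ne: "C \<noteq> {}" and sub: "C \<subseteq> N" and d: "deg2 A C"
  shows "\<not> forest N A"
proof
  assume fo: "forest N A"
  define path where "path ps \<longleftrightarrow> distinct ps \<and> ps \<noteq> [] \<and> set ps \<subseteq> C \<and>
      (\<forall>i. Suc i < length ps \<longrightarrow> A (ps!i) (ps!Suc i))" for ps
  obtain x0 where x0: "x0 \<in> C" using ne by blast
  have p0: "path [x0]" using x0 by (simp add: path_def)
  have bound: "length ps \<le> card C" if "path ps" for ps
  proof -
    have "length ps = card (set ps)" using that by (simp add: path_def distinct_card)
    also have "\<dots> \<le> card C" using that fin by (simp add: path_def card_mono)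
    finally show ?thesis .
  qed
  obtain n where n: "\<exists>ps. path ps \<and> length ps = n" and nmax: "\<forall>m. (\<exists>ps. path ps \<and> length ps = m) \<longrightarrow> m \<le> n"
  proof -
    have "\<exists>ps. path ps \<and> length ps = 1" using p0 by (intro exI[of _ "[x0]"]) simp
    moreover have "\<forall>m. (\<exists>ps. path ps \<and> length ps = m) \<longrightarrow> m \<le> card C" using bound by blast
    ultimately show ?thesis using Nat.ex_has_greatest_nat[of "\<lambda>n. \<exists>ps. path ps \<and> length ps = n" 1 "card C"] that by blast
  qed
  obtain ps where ps: "path ps" "length ps = n" using n by blast
  have np: "0 < n" using ps unfolding path_def by (metis length_greater_0_conv)
  let ?x = "ps ! 0"
  have xC: "?x \<in> C" using ps np by (auto simp: path_def)
  obtain y z where yz: "y \<in> C" "z \<in> C" "y \<noteq> z" "A ?x y" "A ?x z" using d xC by (auto simp: deg2_def)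
  have inps: "w \<in> set ps" if "w \<in> C" "A ?x w" for w
  proof (rule ccontr)
    assume nw: "w \<notin> set ps"
    have "path (w # ps)"
      unfolding path_def
    proof (intro conjI allI impI)
      show "distinct (w # ps)" using nw ps by (simp add: path_def)
      show "w # ps \<noteq> []" by simp
      show "set (w # ps) \<subseteq> C" using that ps by (simp add: path_def)
    next
      fix i assume i: "Suc i < length (w # ps)"
      show "A ((w # ps) ! i) ((w # ps) ! Suc i)"
      proof (cases i)
        case 0 then show ?thesis using sym that(2) by simp
      next
        case (Suc j) then show ?thesis using ps i by (simp add: path_def)
      qed
    qed
    then have "Suc n \<le> n" using nmax ps(2) by (metis length_Cons)
    then show False by simp
  qed
  obtain a where a: "a < n" "ps ! a = y" using inps yz ps(2) by (metis in_set_conv_nth)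
  obtain b where b: "b < n" "ps ! b = z" using inps yz ps(2) by (metis in_set_conv_nth)
  have a0: "a \<noteq> 0"
  proof
    assume "a = 0"
    then have "y = ?x" using a(2) by simp
    then show False using yz(4) irr by simp
  qed
  have b0: "b \<noteq> 0"
  proof
    assume "b = 0"
    then have "z = ?x" using b(2) by simp
    then show False using yz(5) irr by simp
  qed
  have ab: "a \<noteq> b" using a b yz by auto
  define j where "j = max a b"
  have j2: "j \<ge> 2" using a0 b0 ab j_def by linarith
  have jn: "j < n" using a b j_def by simp
  have Aj: "A ?x (ps ! j)" using yz a b j_def by (simp add: max_def)
  define cs where "cs = take (Suc j) ps"
  have lcs: "length cs = Suc j" using jn ps cs_def by simp
  have "distinct cs" using ps cs_def by (simp add: path_def)
  moreover have "length cs \<ge> 3" using lcs j2 by simp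
  moreover have "set cs \<subseteq> N"
  proof -
    have "set cs \<subseteq> set ps" unfolding cs_def by (rule set_take_subset)
    moreover have "set ps \<subseteq> C" using ps(1) by (simp add: path_def)
    ultimately show ?thesis using sub by blast
  qed
  moreover have "\<forall>i<length cs. A (cs ! i) (cs ! (Suc i mod length cs))"
  proof (intro allI impI)
    fix i assume i: "i < length cs"
    show "A (cs ! i) (cs ! (Suc i mod length cs))"
    proof (cases "i = j")
      case True
      then have "cs ! i = ps ! j" "cs ! (Suc i mod length cs) = ps ! 0" using lcs cs_def by auto
      then show ?thesis using Aj sym by simp
    next
      case False
      then have ij: "i < j" using i lcs by simp
      then have "cs ! i = ps ! i" "cs ! (Suc i mod length cs) = ps ! Suc i" using lcs cs_def by auto
      moreover have "Suc i < length ps" using ij jn ps by simp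
      ultimately show ?thesis using ps by (simp add: path_def)
    qed
  qed
  ultimately show False using fo unfolding forest_def by blast
qed




lemma csg_adj_sym: "csg_adj V x y \<Longrightarrow> csg_adj V y x"
proof -
  assume "csg_adj V x y"
  then obtain g g' where "x \<noteq> y" "g \<in> x" "g' \<in> y" "col_adj V g g'" by (auto simp: csg_adj_def)
  then show ?thesis using col_adj_sym[of V g g'] by (auto simp: csg_adj_def)
qed

lemma adj_complete: "adj (complete_edges S) u w \<longleftrightarrow> u \<in> S \<and> w \<in> S \<and> u \<noteq> w"
  unfolding adj_def complete_edges_def by (auto simp: doubleton_eq_iff)

lemma coloring_K: "coloring k S (complete_edges S) \<beta> \<longleftrightarrow>
   (\<forall>t\<in>S. \<beta> t \<in> {1..k}) \<and> (\<forall>t. t \<notin> S \<longrightarrow> \<beta> t = 0) \<and> (\<forall>u\<in>S. \<forall>w\<in>S. u \<noteq> w \<longrightarrow> \<beta> u \<noteq> \<beta> w)"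
  unfolding coloring_def adj_complete by blast

lemma card2_three: "card A = 2 \<Longrightarrow> x \<in> A \<Longrightarrow> y \<in> A \<Longrightarrow> z \<in> A \<Longrightarrow> x \<noteq> y \<Longrightarrow> x \<noteq> z \<Longrightarrow> y \<noteq> z \<Longrightarrow> False"
proof -
  assume c: "card A = 2" and m: "x \<in> A" "y \<in> A" "z \<in> A" and d: "x \<noteq> y" "x \<noteq> z" "y \<noteq> z"
  have fin: "finite A" using c by (cases "finite A") auto
  have "{x, y, z} \<subseteq> A" using m by blast
  then have "card {x, y, z} \<le> card A" using fin by (rule card_mono[rotated])
  moreover have "card {x, y, z} = 3" using d by simp
  ultimately show False using c by simp
qed

lemma rtr_map: "(\<And>x y. R x y \<Longrightarrow> S (f x) (f y)) \<Longrightarrow> R\<^sup>*\<^sup>* a b \<Longrightarrow> S\<^sup>*\<^sup>* (f a) (f b)"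
proof -
  assume h: "\<And>x y. R x y \<Longrightarrow> S (f x) (f y)"
  show "R\<^sup>*\<^sup>* a b \<Longrightarrow> S\<^sup>*\<^sup>* (f a) (f b)"
    by (induction rule: rtranclp_induct) (auto intro: rtranclp.rtrancl_into_rtrancl h)
qed

lemma rtr_inv: "(\<And>x y. R x y \<Longrightarrow> f x = f y) \<Longrightarrow> R\<^sup>*\<^sup>* a b \<Longrightarrow> f a = f b"
proof -
  assume h: "\<And>x y. R x y \<Longrightarrow> f x = f y"
  show "R\<^sup>*\<^sup>* a b \<Longrightarrow> f a = f b"
    by (induction rule: rtranclp_induct) (auto dest: h)
qed

locale L =
  fixes V :: "'a set" and E :: "'a set set" and T :: "'a set" and v :: 'a and k :: nat
  assumes sg: "sgraph V E" and clq: "is_clique V E T" and vT: "v \<in> T"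
    and nb: "neighbors V E v \<subseteq> T" and k3: "k \<ge> 3"
begin

abbreviation "V' \<equiv> V - {v}"
abbreviation "E' \<equiv> {e \<in> E. v \<notin> e}"
abbreviation "T' \<equiv> T - {v}"
abbreviation "colG \<equiv> coloring k V E"
abbreviation "colF \<equiv> coloring k V' E'"
abbreviation "clsG \<equiv> cls k V E T"
abbreviation "clsF \<equiv> cls k V' E' T'"
abbreviation "NG \<equiv> csg_nodes k V E T"
abbreviation "NF \<equiv> csg_nodes k V' E' T'"

lemma TV: "T \<subseteq> V" using clq by (simp add: is_clique_def)
lemma vV: "v \<in> V" using TV vT by blast
lemma finV: "finite V" using sg by (simp add: sgraph_def)

lemma noloop: "\<not> adj E x x"
proof
  assume "adj E x x"
  then have "{x} \<in> E" by (simp add: adj_def)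
  then obtain u w where "{x} = {u, w}" "u \<noteq> w" using sg unfolding sgraph_def by blast
  then show False by (simp add: doubleton_eq_iff) 
qed

lemma adj_sym: "adj E x y = adj E y x" by (simp add: adj_def insert_commute)

lemma adjT: "u \<in> T \<Longrightarrow> w \<in> T \<Longrightarrow> u \<noteq> w \<Longrightarrow> adj E u w"
  using clq by (simp add: is_clique_def)

lemma adjE': "u \<noteq> v \<Longrightarrow> w \<noteq> v \<Longrightarrow> adj E' u w = adj E u w"
  by (simp add: adj_def)

lemma down: "colG a \<Longrightarrow> colF (a(v:=0))"
  unfolding coloring_def using adjE' by auto

lemma colF_v: "colF d \<Longrightarrow> d v = 0" by (simp add: coloring_def)

lemma vdiff: "colG a \<Longrightarrow> t \<in> T' \<Longrightarrow> a t \<noteq> a v"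
  using adjT[of t v] vT TV unfolding coloring_def by blast

lemma inj_T: "colG a \<Longrightarrow> u \<in> T \<Longrightarrow> w \<in> T \<Longrightarrow> u \<noteq> w \<Longrightarrow> a u \<noteq> a w"
  using adjT TV unfolding coloring_def by blast

lemma up:
  assumes d: "colF d" and c: "c \<in> {1..k}" and nt: "\<forall>t\<in>T'. d t \<noteq> c"
  shows "colG (d(v:=c))"
  unfolding coloring_def
proof (intro conjI ballI allI impI)
  fix w assume "w \<in> V" then show "(d(v:=c)) w \<in> {1..k}" using d c by (cases "w = v") (auto simp: coloring_def)
next
  fix w assume "w \<notin> V" then show "(d(v:=c)) w = 0" using d vV by (auto simp: coloring_def)
next
  fix u w assume u: "u \<in> V" and w: "w \<in> V" and a: "adj E u w"
  have uw: "u \<noteq> w" using a noloop by blast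
  show "(d(v:=c)) u \<noteq> (d(v:=c)) w"
  proof (cases "u = v")
    case True
    then have "w \<in> neighbors V E v" using w a by (simp add: neighbors_def)
    then have "w \<in> T'" using nb uw True by blast
    then show ?thesis using True uw nt by auto
  next
    case False note uv = False
    show ?thesis
    proof (cases "w = v")
      case True
      then have "u \<in> neighbors V E v" using u a adj_sym by (simp add: neighbors_def)
      then have "u \<in> T'" using nb uw True by blast
      then show ?thesis using True uw nt by auto
    next
      case False
      then have "adj E' u w" using a uv adjE' by simp
      then show ?thesis using d u w uv False unfolding coloring_def by auto
    qed
  qed
qed

lemma restore: "(a(v:=0))(v := a v) = a" by simp

lemma adj_down: "a v = b v \<Longrightarrow> col_adj V a b = col_adj V' (a(v:=0)) (b(v:=0))"
proof -
  assume "a v = b v"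
  then have "{w\<in>V. a w \<noteq> b w} = {w\<in>V'. (a(v:=0)) w \<noteq> (b(v:=0)) w}" by auto
  then show ?thesis by (simp add: col_adj_def)
qed

lemma adj_up: "col_adj V (d(v:=c)) (e(v:=c)) = col_adj V' d e"
proof -
  have "{w\<in>V. (d(v:=c)) w \<noteq> (e(v:=c)) w} = {w\<in>V'. d w \<noteq> e w}" by auto
  then show ?thesis by (simp add: col_adj_def)
qed

lemma label_split: "label T a = label T b \<longleftrightarrow> a v = b v \<and> label T' (a(v:=0)) = label T' (b(v:=0))"
proof
  assume "label T a = label T b"
  then have h: "\<And>w. label T a w = label T b w" by simp
  show "a v = b v \<and> label T' (a(v:=0)) = label T' (b(v:=0))"
  proof
    show "a v = b v" using h[of v] vT by (simp add: label_def)
    show "label T' (a(v:=0)) = label T' (b(v:=0))"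
    proof
      fix w show "label T' (a(v:=0)) w = label T' (b(v:=0)) w" using h[of w] by (auto simp: label_def split: if_splits)
    qed
  qed
next
  assume h: "a v = b v \<and> label T' (a(v:=0)) = label T' (b(v:=0))"
  show "label T a = label T b"
  proof
    fix w
    show "label T a w = label T b w"
    proof (cases "w = v")
      case True then show ?thesis using h by (simp add: label_def)
    next
      case False
      then show ?thesis using fun_cong[OF conjunct2[OF h], of w] by (auto simp: label_def split: if_splits)
    qed
  qed
qed

lemma labelT'_eq: "label T' d = label T' e \<Longrightarrow> t \<in> T' \<Longrightarrow> d t = e t"
proof -
  assume h: "label T' d = label T' e" and t: "t \<in> T'"
  have "label T' d t = label T' e t" using h by simp
  then show ?thesis using t by (simp add: label_def)
qed

lemma stp_down: "stp k V E T a b \<Longrightarrow> stp k V' E' T' (a(v:=0)) (b(v:=0)) \<and> a v = b v"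
proof -
  assume s: "stp k V E T a b"
  then have ca: "colG a" "colG b" and l: "label T a = label T b" and c: "col_adj V a b" by (auto simp: stp_def)
  have l2: "a v = b v" "label T' (a(v:=0)) = label T' (b(v:=0))" using l label_split by auto
  have "col_adj V' (a(v:=0)) (b(v:=0))" using c adj_down[of a b, OF l2(1)] by simp
  then show ?thesis using down[OF ca(1)] down[OF ca(2)] l2 by (simp add: stp_def)
qed

lemma stp_up:
  assumes s: "stp k V' E' T' d e" and c: "colG (d(v:=c))"
  shows "stp k V E T (d(v:=c)) (e(v:=c))"
proof -
  have ce: "colF e" "colF d" and l: "label T' d = label T' e" and ca: "col_adj V' d e" using s by (auto simp: stp_def)
  have "\<forall>w\<in>V. (d(v:=c)) w \<in> {1..k}" using c unfolding coloring_def by blast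
  then have "(d(v:=c)) v \<in> {1..k}" using vV by blast
  then have cr: "c \<in> {1..k}" by simp
  have nt: "\<forall>t\<in>T'. e t \<noteq> c"
  proof
    fix t assume t: "t \<in> T'"
    have "(d(v:=c)) t \<noteq> (d(v:=c)) v" using vdiff[OF c t] .
    then show "e t \<noteq> c" using labelT'_eq[OF l t] t by simp
  qed
  have ce2: "colG (e(v:=c))" using up[OF ce(1) cr nt] .
  have "label T (d(v:=c)) = label T (e(v:=c))"
  proof -
    have "(d(v:=c))(v:=0) = d" using colF_v[OF ce(2)] by (simp add: fun_eq_iff)
    moreover have "(e(v:=c))(v:=0) = e" using colF_v[OF ce(1)] by (simp add: fun_eq_iff)
    ultimately show ?thesis unfolding label_split using l by simp
  qed
  then show ?thesis using c ce2 ca adj_up unfolding stp_def by blast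
qed

lemma rtr_down: "(stp k V E T)\<^sup>*\<^sup>* a b \<Longrightarrow> (stp k V' E' T')\<^sup>*\<^sup>* (a(v:=0)) (b(v:=0)) \<and> a v = b v"
proof -
  assume h: "(stp k V E T)\<^sup>*\<^sup>* a b"
  have 1: "(stp k V' E' T')\<^sup>*\<^sup>* (a(v:=0)) (b(v:=0))"
    using h rtr_map[of "stp k V E T" "stp k V' E' T'" "\<lambda>x. x(v:=0)"] stp_down by blast
  have 2: "a v = b v"
    using h rtr_inv[of "stp k V E T" "\<lambda>x. x v"] stp_down by blast
  show ?thesis using 1 2 by blast
qed

lemma rtr_up: "(stp k V' E' T')\<^sup>*\<^sup>* d e \<Longrightarrow> colG (d(v:=c)) \<Longrightarrow> (stp k V E T)\<^sup>*\<^sup>* (d(v:=c)) (e(v:=c))"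
proof (induction rule: rtranclp_induct)
  case base then show ?case by simp
next
  case (step y z)
  have ih: "(stp k V E T)\<^sup>*\<^sup>* (d(v:=c)) (y(v:=c))" using step by blast
  have "colG (y(v:=c))" using stp_rtr_col[OF ih step(4)] by blast
  then have "stp k V E T (y(v:=c)) (z(v:=c))" using stp_up[OF step(2)] by blast
  then show ?case by (rule rtranclp.rtrancl_into_rtrancl[OF ih])
qed

lemma cls_down: "b \<in> clsG a \<Longrightarrow> b(v:=0) \<in> clsF (a(v:=0)) \<and> b v = a v"
proof -
  assume "b \<in> clsG a"
  then have "(stp k V E T)\<^sup>*\<^sup>* a b" by (simp add: cls_def)
  from rtr_down[OF this] show ?thesis by (simp add: cls_def)
qed

lemma cls_up: "colG a \<Longrightarrow> e \<in> clsF (a(v:=0)) \<Longrightarrow> e(v:= a v) \<in> clsG a"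
proof -
  assume a: "colG a" and e: "e \<in> clsF (a(v:=0))"
  have "(stp k V' E' T')\<^sup>*\<^sup>* (a(v:=0)) e" using e by (simp add: cls_def)
  moreover have "colG ((a(v:=0))(v:= a v))" using a by simp
  ultimately have "(stp k V E T)\<^sup>*\<^sup>* ((a(v:=0))(v:= a v)) (e(v:= a v))" by (rule rtr_up)
  then show ?thesis by (simp add: cls_def)
qed

lemma det:
  assumes "colG a" "colG b" "clsF (a(v:=0)) = clsF (b(v:=0))" "a v = b v"
  shows "clsG a = clsG b"
proof -
  have "b(v:=0) \<in> clsF (b(v:=0))" by (rule cls_self)
  then have "b(v:=0) \<in> clsF (a(v:=0))" using assms(3) by simp
  then have "(b(v:=0))(v:= a v) \<in> clsG a" by (rule cls_up[OF assms(1)])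
  then have "b \<in> clsG a" using assms(4) by simp
  then show ?thesis by (rule cls_eq[symmetric])
qed

lemma sameF_img:
  assumes "colG a" "clsF (a(v:=0)) = clsF (b(v:=0))" "t \<in> T'"
  shows "a t = b t"
proof -
  have "b(v:=0) \<in> clsF (b(v:=0))" by (rule cls_self)
  then have "b(v:=0) \<in> clsF (a(v:=0))" using assms(2) by simp
  then have "label T' (b(v:=0)) = label T' (a(v:=0))" using cls_mem down[OF assms(1)] by blast
  then show ?thesis using labelT'_eq assms(3) by fastforce
qed

lemma labelK: "colG a \<Longrightarrow> coloring k T (complete_edges T) (label T a)"
proof -
  assume a: "colG a"
  have "\<forall>t\<in>T. label T a t \<in> {1..k}" using a TV unfolding coloring_def label_def by auto
  moreover have "\<forall>t. t \<notin> T \<longrightarrow> label T a t = 0" by (simp add: label_def)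
  moreover have "\<forall>u\<in>T. \<forall>w\<in>T. u \<noteq> w \<longrightarrow> label T a u \<noteq> label T a w" using inj_T[OF a] by (simp add: label_def)
  ultimately show ?thesis unfolding coloring_K by blast
qed

lemma labelKF: "colF d \<Longrightarrow> coloring k T' (complete_edges T') (label T' d)"
proof -
  assume d: "colF d"
  have "d u \<noteq> d w" if "u \<in> T'" "w \<in> T'" "u \<noteq> w" for u w
  proof -
    have "adj E' u w" using adjT[of u w] adjE'[of u w] that by simp
    moreover have "u \<in> V'" "w \<in> V'" using that TV by auto
    ultimately show ?thesis using d unfolding coloring_def by blast
  qed
  moreover have "\<forall>t\<in>T'. label T' d t \<in> {1..k}" using d TV unfolding coloring_def label_def by auto
  moreover have "\<forall>t. t \<notin> T' \<longrightarrow> label T' d t = 0" by (simp add: label_def)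
  ultimately show ?thesis unfolding coloring_K by (simp add: label_def)
qed

end




context L begin

lemma nodeG: "S \<in> NG \<longleftrightarrow> (\<exists>a. colG a \<and> S = clsG a)" by (auto simp: nodes_eq)
lemma nodeF: "X \<in> NF \<longleftrightarrow> (\<exists>d. colF d \<and> X = clsF d)" by (auto simp: nodes_eq)

lemma part1:
  assumes cc: "color_complete (k - 2) k NF (csg_adj V') (csg_label T')"
    and col: "colorable k V E"
  shows "color_complete (k - 1) k NG (csg_adj V) (csg_label T)"
proof -
  obtain T0 where fT0: "finite T0" and cT0: "card T0 = k - 2"
    and c1: "\<forall>x\<in>NF. coloring k T0 (complete_edges T0) (csg_label T' x)"
    and c2: "\<forall>\<beta>. coloring k T0 (complete_edges T0) \<beta> \<longrightarrow> (\<exists>!x. x \<in> NF \<and> csg_label T' x = \<beta>)"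
    and c3: "\<forall>x\<in>NF. \<forall>y\<in>NF. csg_adj V' x y \<longleftrightarrow> card {t \<in> T0. csg_label T' x t \<noteq> csg_label T' y t} = 1"
    using cc unfolding color_complete_def by blast
  obtain \<alpha> where \<alpha>: "colG \<alpha>" using col by (auto simp: colorable_def)
  define d0 where "d0 = \<alpha>(v:=0)"
  have d0: "colF d0" using down[OF \<alpha>] d0_def by simp
  have "clsF d0 \<in> NF" using d0 nodeF by blast
  then have "coloring k T0 (complete_edges T0) (csg_label T' (clsF d0))" using c1 by blast
  then have "coloring k T0 (complete_edges T0) (label T' d0)" using csg_label_cls[OF d0] by simp
  then have K0: "(\<forall>t\<in>T0. label T' d0 t \<in> {1..k}) \<and> (\<forall>t. t \<notin> T0 \<longrightarrow> label T' d0 t = 0)"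
    unfolding coloring_K by blast
  have T0eq: "T0 = T'"
  proof
    show "T0 \<subseteq> T'"
    proof
      fix t assume "t \<in> T0"
      then have "label T' d0 t \<noteq> 0" using K0 by fastforce
      then show "t \<in> T'" by (auto simp: label_def split: if_splits)
    qed
    show "T' \<subseteq> T0"
    proof
      fix t assume t: "t \<in> T'"
      then have "t \<in> V'" using TV by blast
      then have "d0 t \<in> {1..k}" using d0 unfolding coloring_def by blast
      then have "label T' d0 t \<noteq> 0" using t by (simp add: label_def)
      then show "t \<in> T0" using K0 by (meson)
    qed
  qed
  have finT: "finite T" using finV TV finite_subset by blast
  have cT': "card T' = k - 2" using cT0 T0eq by simp
  have cT: "card T = k - 1"
  proof -
    have "card T = Suc (card T')" using card_Suc_Diff1[OF finT vT] by simp
    then show ?thesis using cT' k3 by simp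
  qed
  have c2': "\<exists>!x. x \<in> NF \<and> csg_label T' x = \<beta>" if "coloring k T' (complete_edges T') \<beta>" for \<beta>
    using c2 that T0eq by simp
  have uniq: "clsG a = clsG b" if a: "colG a" and b: "colG b" and l: "label T a = label T b" for a b
  proof -
    have l2: "a v = b v" "label T' (a(v:=0)) = label T' (b(v:=0))" using l label_split by auto
    have da: "colF (a(v:=0))" and db: "colF (b(v:=0))" using down a b by auto
    have "clsF (a(v:=0)) \<in> NF" "clsF (b(v:=0)) \<in> NF" using da db nodeF by blast+
    moreover have "csg_label T' (clsF (a(v:=0))) = label T' (a(v:=0))" using csg_label_cls[OF da] .
    moreover have "csg_label T' (clsF (b(v:=0))) = label T' (a(v:=0))" using csg_label_cls[OF db] l2 by simp
    ultimately have "clsF (a(v:=0)) = clsF (b(v:=0))" using c2'[OF labelKF[OF da]] by blast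
    then show ?thesis using det[OF a b _ l2(1)] by blast
  qed
  show ?thesis unfolding color_complete_def
  proof (intro exI[of _ T] conjI ballI allI impI)
    show "finite T" by (rule finT)
    show "card T = k - 1" by (rule cT)
  next
    fix x assume "x \<in> NG"
    then obtain a where a: "colG a" "x = clsG a" using nodeG by blast
    then show "coloring k T (complete_edges T) (csg_label T x)" by (simp add: csg_label_cls labelK)
  next
    fix \<beta> assume \<beta>: "coloring k T (complete_edges T) \<beta>"
    then have \<beta>K: "\<forall>t\<in>T. \<beta> t \<in> {1..k}" "\<forall>t. t \<notin> T \<longrightarrow> \<beta> t = 0" "\<forall>u\<in>T. \<forall>w\<in>T. u \<noteq> w \<longrightarrow> \<beta> u \<noteq> \<beta> w"
      unfolding coloring_K by blast+
    define \<beta>' where "\<beta>' = \<beta>(v:=0)"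
    have "coloring k T' (complete_edges T') \<beta>'" unfolding coloring_K \<beta>'_def using \<beta>K by auto
    then obtain x' where x': "x' \<in> NF" "csg_label T' x' = \<beta>'" using c2' by blast
    then obtain d where d: "colF d" "x' = clsF d" using nodeF by blast
    have ld: "label T' d = \<beta>'" using x'(2) d by (simp add: csg_label_cls)
    have dt: "d t = \<beta> t" if "t \<in> T'" for t
    proof -
      have "label T' d t = \<beta>' t" using ld by simp
      then show ?thesis using that by (simp add: label_def \<beta>'_def)
    qed
    define a where "a = d(v := \<beta> v)"
    have bv: "\<beta> v \<in> {1..k}" using \<beta>K vT by blast
    have "\<forall>t\<in>T'. d t \<noteq> \<beta> v" using dt \<beta>K vT by auto
    then have a: "colG a" unfolding a_def using up[OF d(1) bv] by blast
    have la: "label T a = \<beta>"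
    proof
      fix w show "label T a w = \<beta> w"
      proof (cases "w \<in> T")
        case True then show ?thesis using dt by (cases "w = v") (auto simp: label_def a_def)
      next
        case False then show ?thesis using \<beta>K by (simp add: label_def)
      qed
    qed
    show "\<exists>!x. x \<in> NG \<and> csg_label T x = \<beta>"
    proof
      show "clsG a \<in> NG \<and> csg_label T (clsG a) = \<beta>" using a la nodeG by (auto simp: csg_label_cls)
    next
      fix y assume y: "y \<in> NG \<and> csg_label T y = \<beta>"
      then obtain b where b: "colG b" "y = clsG b" using nodeG by blast
      then have "label T b = label T a" using y la by (simp add: csg_label_cls)
      then show "y = clsG a" using uniq[OF b(1) a] b by simp
    qed
  next
    fix x y assume x: "x \<in> NG" and y: "y \<in> NG"
    obtain a where a: "colG a" "x = clsG a" using x nodeG by blast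
    obtain b where b: "colG b" "y = clsG b" using y nodeG by blast
    have Deq: "{t \<in> T. csg_label T x t \<noteq> csg_label T y t} = {t \<in> T. a t \<noteq> b t}"
      using a b by (simp add: csg_label_cls label_def) blast
    show "csg_adj V x y \<longleftrightarrow> card {t \<in> T. csg_label T x t \<noteq> csg_label T y t} = 1"
    proof
      assume "csg_adj V x y"
      then obtain a' b' where xy: "x \<noteq> y" and a': "a' \<in> x" and b': "b' \<in> y" and ab: "col_adj V a' b'"
        unfolding csg_adj_def by blast
      have ca': "colG a'" and la': "label T a' = label T a" using a' a cls_mem by blast+
      have cb': "colG b'" and lb': "label T b' = label T b" using b' b cls_mem by blast+
      have "label T a' \<noteq> label T b'"
      proof
        assume "label T a' = label T b'"
        then have "stp k V E T a' b'" using ca' cb' ab by (simp add: stp_def)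
        then have "clsG b' = clsG a'" by (rule cls_eq_stp)
        moreover have "clsG a' = x" "clsG b' = y" using a' b' a b cls_eq by blast+
        ultimately show False using xy by simp
      qed
      then obtain t where t: "t \<in> T" "a' t \<noteq> b' t" by (auto simp: label_def fun_eq_iff split: if_splits)
      have sub: "{t \<in> T. a' t \<noteq> b' t} \<subseteq> {w \<in> V. a' w \<noteq> b' w}" using TV by blast
      have "card {w \<in> V. a' w \<noteq> b' w} = 1" using ab by (simp add: col_adj_def)
      then have "card {t \<in> T. a' t \<noteq> b' t} \<le> 1" using card_mono[OF _ sub] finV by simp
      moreover have "card {t \<in> T. a' t \<noteq> b' t} \<noteq> 0"
      proof -
        have "{t \<in> T. a' t \<noteq> b' t} \<noteq> {}" using t by blast
        moreover have "finite {t \<in> T. a' t \<noteq> b' t}" using finT by simp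
        ultimately show ?thesis by simp
      qed
      ultimately have c1': "card {t \<in> T. a' t \<noteq> b' t} = 1" by linarith
      have "{t \<in> T. a' t \<noteq> b' t} = {t \<in> T. a t \<noteq> b t}"
      proof -
        have "\<forall>t\<in>T. a' t = a t"
        proof
          fix t assume "t \<in> T" then show "a' t = a t" using fun_cong[OF la', of t] by (simp add: label_def)
        qed
        moreover have "\<forall>t\<in>T. b' t = b t"
        proof
          fix t assume "t \<in> T" then show "b' t = b t" using fun_cong[OF lb', of t] by (simp add: label_def)
        qed
        ultimately show ?thesis by auto
      qed
      then show "card {t \<in> T. csg_label T x t \<noteq> csg_label T y t} = 1" using c1' Deq by simp
    next
      assume "card {t \<in> T. csg_label T x t \<noteq> csg_label T y t} = 1"
      then have "card {t \<in> T. a t \<noteq> b t} = 1" using Deq by simp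
      then obtain t where tD: "{t \<in> T. a t \<noteq> b t} = {t}" by (rule card_1_singletonE)
      then have tT: "t \<in> T" and abt: "a t \<noteq> b t" by auto
      have oth: "s \<in> T \<Longrightarrow> s \<noteq> t \<Longrightarrow> a s = b s" for s using tD by blast
      have xy: "x \<noteq> y"
      proof
        assume "x = y"
        then have "csg_label T x = csg_label T y" by simp
        then have "label T a = label T b" using a b csg_label_cls[of k V E a T] csg_label_cls[of k V E b T] by simp
        then have "label T a t = label T b t" by simp
        then show False using tT abt by (simp add: label_def)
      qed
      show "csg_adj V x y"
      proof (cases "t = v")
        case True
        define e where "e = (a(v:=0))(v := b v)"
        have bv: "b v \<in> {1..k}" using b(1) vV unfolding coloring_def by blast
        have "\<forall>s\<in>T'. (a(v:=0)) s \<noteq> b v" using oth vdiff[OF b(1)] True by auto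
        then have ce: "colG e" unfolding e_def using up[OF down[OF a(1)] bv] by blast
        have "label T e = label T b"
        proof
          fix w show "label T e w = label T b w"
            using oth True by (cases "w = v") (auto simp: label_def e_def)
        qed
        then have "clsG e = clsG b" using uniq[OF ce b(1)] by simp
        then have ey: "e \<in> y" using b(2) cls_self[of e k V E T] by simp
        have "{w \<in> V. a w \<noteq> e w} = {v}" using abt True vV by (auto simp: e_def)
        then have "col_adj V a e" by (simp add: col_adj_def)
        moreover have "a \<in> x" using a(2) cls_self by simp
        ultimately show ?thesis using xy ey unfolding csg_adj_def by blast
      next
        case False
        then have tT': "t \<in> T'" using tT by blast
        have avbv: "a v = b v" using oth[OF vT] False by simp
        have da: "colF (a(v:=0))" and db: "colF (b(v:=0))" using down a b by auto
        have X: "clsF (a(v:=0)) \<in> NF" and Y: "clsF (b(v:=0)) \<in> NF" using da db nodeF by blast+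
        have "{s \<in> T0. csg_label T' (clsF (a(v:=0))) s \<noteq> csg_label T' (clsF (b(v:=0))) s} = {t}"
          using csg_label_cls[OF da] csg_label_cls[OF db] T0eq tD tT' by (auto simp: label_def)
        then have "csg_adj V' (clsF (a(v:=0))) (clsF (b(v:=0)))" using c3 X Y by simp
        then obtain d e where de: "d \<in> clsF (a(v:=0))" "e \<in> clsF (b(v:=0))" "col_adj V' d e"
          unfolding csg_adj_def by blast
        have "d(v := a v) \<in> x" using cls_up[OF a(1) de(1)] a by simp
        moreover have "e(v := a v) \<in> y" using cls_up[OF b(1) de(2)] b avbv by simp
        moreover have "col_adj V (d(v := a v)) (e(v := a v))" using adj_up de(3) by simp
        ultimately show ?thesis using xy unfolding csg_adj_def by blast
      qed
    qed
  qed
qed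

end



context L begin

lemma noedge:
  assumes cT: "card T = k" and x: "x \<in> NG" and y: "y \<in> NG"
  shows "\<not> csg_adj V x y"
proof
  assume "csg_adj V x y"
  then obtain a b where xy: "x \<noteq> y" and a: "a \<in> x" and b: "b \<in> y" and ab: "col_adj V a b"
    unfolding csg_adj_def by blast
  obtain a0 where a0: "colG a0" "x = clsG a0" using x nodeG by blast
  obtain b0 where b0: "colG b0" "y = clsG b0" using y nodeG by blast
  have ca: "colG a" and cb: "colG b" using a b a0 b0 cls_mem by blast+
  have xa: "clsG a = x" and yb: "clsG b = y" using a b a0 b0 cls_eq by blast+
  have finT: "finite T" using finV TV finite_subset by blast
  obtain w where w: "{u \<in> V. a u \<noteq> b u} = {w}" using ab unfolding col_adj_def by (rule card_1_singletonE)
  have "label T a \<noteq> label T b"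
  proof
    assume "label T a = label T b"
    then have "stp k V E T a b" using ca cb ab by (simp add: stp_def)
    then have "clsG b = clsG a" by (rule cls_eq_stp)
    then show False using xa yb xy by simp
  qed
  then obtain t where t: "t \<in> T" "a t \<noteq> b t" by (auto simp: label_def fun_eq_iff split: if_splits)
  have tw: "t = w" using w t TV by blast
  have oth: "u \<in> V \<Longrightarrow> u \<noteq> t \<Longrightarrow> a u = b u" for u using w tw by blast
  have injA: "inj_on a T" using inj_T[OF ca] by (auto simp: inj_on_def)
  have sub: "a ` T \<subseteq> {1..k}" using ca TV unfolding coloring_def by blast
  have "card (a ` T) = k" using card_image[OF injA] cT by simp
  then have full: "a ` T = {1..k}" using sub by (simp add: card_subset_eq)
  have "b t \<in> {1..k}" using cb t TV unfolding coloring_def by blast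
  then have "b t \<in> a ` T" using full by simp
  then obtain u where u: "u \<in> T" "a u = b t" by (auto simp: image_def)
  have ut: "u \<noteq> t" using u t by auto
  have "a u = b u" using oth[OF _ ut] u TV by blast
  then have "b u = b t" using u by simp
  then show False using inj_T[OF cb u(1) t(1) ut] by simp
qed

end

locale L2 = L +
  assumes cT': "card T' = k - 2"
begin

definition rep :: "('a \<Rightarrow> nat) set \<Rightarrow> ('a \<Rightarrow> nat)" where "rep S = (SOME a. a \<in> S)"
definition P :: "('a \<Rightarrow> nat) set \<Rightarrow> ('a \<Rightarrow> nat) set" where "P S = clsF ((rep S)(v:=0))"
definition col :: "('a \<Rightarrow> nat) set \<Rightarrow> nat" where "col S = rep S v"
definition Img :: "('a \<Rightarrow> nat) set \<Rightarrow> nat set" where "Img S = rep S ` T'"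

lemma node_rep:
  assumes S: "S \<in> NG" and a: "a \<in> S"
  shows "colG a \<and> S = clsG a \<and> P S = clsF (a(v:=0)) \<and> col S = a v \<and> Img S = a ` T'"
proof -
  obtain a0 where a0: "colG a0" "S = clsG a0" using S nodeG by blast
  have ca: "colG a" using a a0 cls_mem by blast
  have Sa: "S = clsG a" using a a0 cls_eq by blast
  have "rep S \<in> S" unfolding rep_def by (rule someI[of "\<lambda>a. a \<in> S", OF a])
  then have r: "rep S \<in> clsG a" using Sa by simp
  have r1: "(rep S)(v:=0) \<in> clsF (a(v:=0))" and r2: "rep S v = a v" using cls_down[OF r] by auto
  have PS: "P S = clsF (a(v:=0))" unfolding P_def using cls_eq[OF r1] .
  have "Img S = a ` T'"
  proof -
    have "\<forall>t\<in>T'. rep S t = a t"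
    proof
      fix t assume t: "t \<in> T'"
      have "clsF (a(v:=0)) = clsF ((rep S)(v:=0))" using cls_eq[OF r1] by simp
      then show "rep S t = a t" using sameF_img[OF ca _ t] by simp
    qed
    then show ?thesis unfolding Img_def by (auto simp: image_def)
  qed
  then show ?thesis using ca Sa PS r2 col_def by simp
qed

lemma node_ex: "S \<in> NG \<Longrightarrow> \<exists>a. a \<in> S"
proof -
  assume "S \<in> NG"
  then obtain a where "S = clsG a" using nodeG by blast
  then have "a \<in> S" using cls_self[of a k V E T] by simp
  then show ?thesis by blast
qed

lemma F1: "S \<in> NG \<Longrightarrow> P S \<in> NF"
proof -
  assume S: "S \<in> NG"
  obtain a where a: "a \<in> S" using node_ex S by blast
  have "colG a" "P S = clsF (a(v:=0))" using node_rep[OF S a] by auto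
  then show ?thesis using down nodeF by blast
qed

lemma F2:
  assumes "S1 \<in> NG" "S2 \<in> NG" "P S1 = P S2" "col S1 = col S2"
  shows "S1 = S2"
proof -
  obtain a where a: "a \<in> S1" using node_ex assms(1) by blast
  obtain b where b: "b \<in> S2" using node_ex assms(2) by blast
  have A: "colG a" "S1 = clsG a" "P S1 = clsF (a(v:=0))" "col S1 = a v" using node_rep[OF assms(1) a] by auto
  have B: "colG b" "S2 = clsG b" "P S2 = clsF (b(v:=0))" "col S2 = b v" using node_rep[OF assms(2) b] by auto
  show ?thesis using det[OF A(1) B(1)] A B assms(3,4) by simp
qed

lemma Fimg:
  assumes "S \<in> NG"
  shows "card (Img S) = k - 2 \<and> Img S \<subseteq> {1..k} \<and> col S \<in> {1..k} - Img S"
proof -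
  obtain a where a: "a \<in> S" using node_ex assms by blast
  have A: "colG a" "col S = a v" "Img S = a ` T'" using node_rep[OF assms a] by auto
  have "inj_on a T'" using inj_T[OF A(1)] by (auto simp: inj_on_def)
  then have "card (a ` T') = k - 2" using card_image[of a T'] cT' by simp
  moreover have "a ` T' \<subseteq> {1..k}" using A(1) TV unfolding coloring_def by blast
  moreover have "a v \<in> {1..k}" using A(1) vV unfolding coloring_def by blast
  moreover have "a v \<notin> a ` T'"
  proof
    assume "a v \<in> a ` T'"
    then obtain t where "t \<in> T'" "a v = a t" by blast
    then show False using vdiff[OF A(1), of t] by simp
  qed
  ultimately show ?thesis using A by simp
qed

lemma F5: "S \<in> NG \<Longrightarrow> card ({1..k} - Img S) = 2"
proof -
  assume S: "S \<in> NG"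
  have "Img S \<subseteq> {1..k}" "card (Img S) = k - 2" using Fimg[OF S] by auto
  then have "card ({1..k} - Img S) = k - (k - 2)" by (simp add: card_Diff_subset finite_subset)
  then show ?thesis using k3 by simp
qed

lemma F6:
  assumes "S1 \<in> NG" "S2 \<in> NG" "P S1 = P S2"
  shows "Img S1 = Img S2"
proof -
  obtain a where a: "a \<in> S1" using node_ex assms(1) by blast
  obtain b where b: "b \<in> S2" using node_ex assms(2) by blast
  have A: "colG a" "P S1 = clsF (a(v:=0))" "Img S1 = a ` T'" using node_rep[OF assms(1) a] by auto
  have B: "colG b" "P S2 = clsF (b(v:=0))" "Img S2 = b ` T'" using node_rep[OF assms(2) b] by auto
  have eq: "clsF (a(v:=0)) = clsF (b(v:=0))" using A(2) B(2) assms(3) by simp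
  have "a ` T' = b ` T'"
  proof (rule image_cong[OF refl])
    fix t assume "t \<in> T'" then show "a t = b t" using sameF_img[OF A(1) eq] by blast
  qed
  then show ?thesis using A(3) B(3) by simp
qed

lemma F7:
  assumes S1: "S1 \<in> NG" and S2: "S2 \<in> NG" and adj: "csg_adj V S1 S2"
  shows "(P S1 = P S2 \<and> col S1 \<noteq> col S2) \<or>
         (P S1 \<noteq> P S2 \<and> col S1 = col S2 \<and> csg_adj V' (P S1) (P S2) \<and> \<not> Img S2 \<subseteq> Img S1)"
proof -
  obtain a b where xy: "S1 \<noteq> S2" and a: "a \<in> S1" and b: "b \<in> S2" and ab: "col_adj V a b"
    using adj unfolding csg_adj_def by blast
  have A: "colG a" "S1 = clsG a" "P S1 = clsF (a(v:=0))" "col S1 = a v" "Img S1 = a ` T'" using node_rep[OF S1 a] by auto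
  have B: "colG b" "S2 = clsG b" "P S2 = clsF (b(v:=0))" "col S2 = b v" "Img S2 = b ` T'" using node_rep[OF S2 b] by auto
  obtain w where w: "{u \<in> V. a u \<noteq> b u} = {w}" using ab unfolding col_adj_def by (rule card_1_singletonE)
  show ?thesis
  proof (cases "w = v")
    case True
    have "a(v:=0) = b(v:=0)"
    proof
      fix u show "(a(v:=0)) u = (b(v:=0)) u"
      proof (cases "u \<in> V")
        case True then show ?thesis using w \<open>w = v\<close> by auto
      next
        case False then show ?thesis using A(1) B(1) by (simp add: coloring_def)
      qed
    qed
    moreover have "a v \<noteq> b v" using w True by blast
    ultimately show ?thesis using A B by simp
  next
    case False
    then have wv: "w \<noteq> v" .
    have "v \<notin> {u \<in> V. a u \<noteq> b u}" using w wv by auto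
    then have avbv: "a v = b v" using vV by blast
    have cadj: "col_adj V' (a(v:=0)) (b(v:=0))" using ab adj_down[of a b, OF avbv] by simp
    have neq: "clsF (a(v:=0)) \<noteq> clsF (b(v:=0))"
    proof
      assume "clsF (a(v:=0)) = clsF (b(v:=0))"
      then have "clsG a = clsG b" using det[OF A(1) B(1) _ avbv] by simp
      then show False using xy A B by simp
    qed
    have "label T' (a(v:=0)) \<noteq> label T' (b(v:=0))"
    proof
      assume "label T' (a(v:=0)) = label T' (b(v:=0))"
      then have "stp k V' E' T' (a(v:=0)) (b(v:=0))" using down[OF A(1)] down[OF B(1)] cadj by (simp add: stp_def)
      then have "clsF (b(v:=0)) = clsF (a(v:=0))" by (rule cls_eq_stp)
      then show False using neq by simp
    qed
    then obtain t where t: "t \<in> T'" "a t \<noteq> b t" by (auto simp: label_def fun_eq_iff split: if_splits)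
    have tw: "t = w" using w t TV by blast
    have "b t \<notin> a ` T'"
    proof
      assume "b t \<in> a ` T'"
      then obtain u where u: "u \<in> T'" "b t = a u" by blast
      show False
      proof (cases "u = t")
        case True then show False using u t by simp
      next
        case False
        then have ut: "u \<noteq> t" .
        then have "a u = b u" using w tw u TV by blast
        then have "b u = b t" using u by simp
        then show False using inj_T[OF B(1), of u t] u t ut by blast
      qed
    qed
    then have "\<not> Img S2 \<subseteq> Img S1" using A(5) B(5) t by blast
    moreover have "csg_adj V' (P S1) (P S2)"
    proof -
      have "a(v:=0) \<in> P S1" using A(3) cls_self by simp
      moreover have "b(v:=0) \<in> P S2" using B(3) cls_self by simp
      ultimately show ?thesis unfolding csg_adj_def using A(3) B(3) neq cadj by blast
    qed
    ultimately show ?thesis using A B neq avbv by simp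
  qed
qed

lemma F8:
  assumes n: "S1 \<in> NG" "S2 \<in> NG" "S1' \<in> NG" "S2' \<in> NG"
    and e: "csg_adj V S1 S2" "csg_adj V S1' S2'"
    and c: "P S1 \<noteq> P S2" "P S1' \<noteq> P S2'"
    and s: "P S1 = P S1'" "P S2 = P S2'"
  shows "col S1 = col S1'"
proof -
  have h1: "col S1 = col S2" "\<not> Img S2 \<subseteq> Img S1" using F7[OF n(1,2) e(1)] c(1) by auto
  have h2: "col S1' = col S2'" using F7[OF n(3,4) e(2)] c(2) by auto
  have i1: "Img S1' = Img S1" using F6[OF n(1,3) s(1)] by simp
  have i2: "Img S2' = Img S2" using F6[OF n(2,4) s(2)] by simp
  define U where "U = Img S1 \<union> Img S2"
  define Q where "Q = {1..k} - U"
  have U: "U \<subseteq> {1..k}" using Fimg[OF n(1)] Fimg[OF n(2)] U_def by auto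
  have "Img S1 \<subset> U" using h1(2) U_def by blast
  moreover have "finite U" using U finite_subset by blast
  ultimately have "card (Img S1) < card U" using psubset_card_mono by blast
  then have cU: "card U \<ge> k - 1" using Fimg[OF n(1)] k3 by linarith
  have "card Q = k - card U" unfolding Q_def using U by (simp add: card_Diff_subset finite_subset)
  then have cQ: "card Q \<le> 1" using cU by linarith
  have "col S1 \<in> Q" using Fimg[OF n(1)] Fimg[OF n(2)] h1(1) Q_def U_def by auto
  moreover have "col S1' \<in> Q" using Fimg[OF n(3)] Fimg[OF n(4)] h2 i1 i2 Q_def U_def by auto
  moreover have "finite Q" unfolding Q_def by simp
  ultimately show ?thesis using cQ card_le_Suc0_iff_eq[of Q] by simp
qed

lemma fiber3:
  assumes n: "S1 \<in> NG" "S2 \<in> NG" "S3 \<in> NG" and d: "S1 \<noteq> S2" "S1 \<noteq> S3" "S2 \<noteq> S3"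
    and p: "P S2 = P S1" "P S3 = P S1"
  shows False
proof -
  have "col S1 \<noteq> col S2" using F2[OF n(1,2)] p d by auto
  moreover have "col S1 \<noteq> col S3" using F2[OF n(1,3)] p d by auto
  moreover have "col S2 \<noteq> col S3" using F2[OF n(2,3)] p d by auto
  moreover have "col S2 \<in> {1..k} - Img S1" using Fimg[OF n(2)] F6[OF n(1,2)] p by simp
  moreover have "col S3 \<in> {1..k} - Img S1" using Fimg[OF n(3)] F6[OF n(1,3)] p by simp
  moreover have "col S1 \<in> {1..k} - Img S1" using Fimg[OF n(1)] by simp
  ultimately show False using card2_three[OF F5[OF n(1)]] by blast
qed

end



context L2 begin

lemma irr: "\<not> csg_adj W x x" by (simp add: csg_adj_def)

lemma mate_cross:
  assumes CN: "C \<subseteq> NG" and d2: "deg2 (csg_adj V) C" and m: "a \<in> C" "y \<in> C" "z \<in> C"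
    and ay: "csg_adj V a y" and py: "P y = P a" and az: "csg_adj V a z" and pz: "P z \<noteq> P a"
  shows "\<exists>Y Z. Y \<in> P ` C \<and> Z \<in> P ` C \<and> Y \<noteq> Z \<and> csg_adj V' (P a) Y \<and> csg_adj V' (P a) Z"
proof -
  obtain y1 y2 where y12: "y1 \<in> C" "y2 \<in> C" "y1 \<noteq> y2" "csg_adj V y y1" "csg_adj V y y2"
    using d2 m(2) unfolding deg2_def by blast
  have "\<exists>w\<in>C. csg_adj V y w \<and> P w \<noteq> P y"
  proof (rule ccontr)
    assume "\<not> (\<exists>w\<in>C. csg_adj V y w \<and> P w \<noteq> P y)"
    then have "P y1 = P y" "P y2 = P y" using y12 by auto
    moreover have "y \<noteq> y1" "y \<noteq> y2" using y12 irr by metis+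
    ultimately show False using fiber3[of y y1 y2] CN m y12 by blast
  qed
  then obtain w where w: "w \<in> C" "csg_adj V y w" "P w \<noteq> P y" by blast
  have yn: "y \<in> NG" "a \<in> NG" "z \<in> NG" "w \<in> NG" using CN m w by auto
  have "csg_adj V' (P y) (P w)" using F7[OF yn(1) yn(4) w(2)] w(3) by auto
  then have aw: "csg_adj V' (P a) (P w)" using py by simp
  have azF: "csg_adj V' (P a) (P z)" using F7[OF yn(2) yn(3) az] pz by auto
  have "P w \<noteq> P z"
  proof
    assume pwz: "P w = P z"
    have "col a = col y" using F8[OF yn(2) yn(3) yn(1) yn(4) az w(2)] pz w(3) py pwz by metis
    then have "a = y" using F2[OF yn(2) yn(1)] py by simp
    then show False using ay irr by metis
  qed
  then show ?thesis using aw azF m(3) w(1) by blast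
qed

lemma H_forest:
  assumes fF: "forest NF (csg_adj V')"
  shows "forest NG (csg_adj V)"
proof (rule ccontr)
  assume "\<not> forest NG (csg_adj V)"
  then obtain cs where cs: "distinct cs" "length cs \<ge> 3" "set cs \<subseteq> NG"
    "\<forall>i<length cs. csg_adj V (cs ! i) (cs ! (Suc i mod length cs))"
    unfolding forest_def by blast
  define C where "C = set cs"
  have d2: "deg2 (csg_adj V) C" unfolding C_def
    by (rule cycle_deg2[OF _ cs(1) cs(2) cs(4)]) (rule csg_adj_sym)
  have CN: "C \<subseteq> NG" using cs C_def by simp
  define D where "D = P ` C"
  have finD: "finite D" unfolding D_def C_def by simp
  have neD: "D \<noteq> {}" unfolding D_def C_def using cs(2) by auto
  have subD: "D \<subseteq> NF" unfolding D_def using CN F1 by blast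
  have "deg2 (csg_adj V') D" unfolding deg2_def
  proof
    fix X assume "X \<in> D"
    then obtain a where a: "a \<in> C" "X = P a" unfolding D_def by blast
    obtain y z where yz: "y \<in> C" "z \<in> C" "y \<noteq> z" "csg_adj V a y" "csg_adj V a z"
      using d2 a(1) unfolding deg2_def by blast
    have n: "a \<in> NG" "y \<in> NG" "z \<in> NG" using CN a yz by auto
    have ay: "a \<noteq> y" and az: "a \<noteq> z" using yz irr by metis+
    show "\<exists>Y Z. Y \<in> D \<and> Z \<in> D \<and> Y \<noteq> Z \<and> csg_adj V' X Y \<and> csg_adj V' X Z"
    proof (cases "P y = P a")
      case True
      then have "P z \<noteq> P a" using fiber3[OF n(1) n(2) n(3) ay az yz(3)] by metis
      then show ?thesis using mate_cross[OF CN d2 a(1) yz(1) yz(2) yz(4) True yz(5)] a D_def by blast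
    next
      case False note pya = False
      show ?thesis
      proof (cases "P z = P a")
        case True
        then show ?thesis using mate_cross[OF CN d2 a(1) yz(2) yz(1) yz(5) True yz(4) pya] a D_def by blast
      next
        case False
        have hy: "col a = col y" "csg_adj V' (P a) (P y)" using F7[OF n(1) n(2) yz(4)] pya by auto
        have hz: "col a = col z" "csg_adj V' (P a) (P z)" using F7[OF n(1) n(3) yz(5)] False by auto
        have "P y \<noteq> P z"
        proof
          assume "P y = P z"
          then have "y = z" using F2[OF n(2) n(3)] hy hz by simp
          then show False using yz(3) by simp
        qed
        then show ?thesis using hy hz a yz D_def by blast
      qed
    qed
  qed
  then have "\<not> forest NF (csg_adj V')"
    using deg2_not_forest[of "csg_adj V'" D NF] csg_adj_sym irr finD neD subD by blast
  then show False using fF by simp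
qed

lemma labs:
  assumes S: "S \<in> NG" and a: "a \<in> S"
  shows "csg_label T S = label T a \<and> csg_label T' (P S) = label T' (a(v:=0))"
proof -
  have A: "colG a" "S = clsG a" "P S = clsF (a(v:=0))" using node_rep[OF S a] by auto
  show ?thesis using A csg_label_cls[OF A(1), of T] csg_label_cls[OF down[OF A(1)], of T'] by simp
qed

lemma H_inj:
  assumes iF: "inj_nbhd NF (csg_adj V') (csg_label T')"
  shows "inj_nbhd NG (csg_adj V) (csg_label T)"
  unfolding inj_nbhd_def
proof (intro ballI impI)
  fix x y z assume n: "x \<in> NG" "y \<in> NG" "z \<in> NG" and h: "csg_adj V x y \<and> csg_adj V x z \<and> y \<noteq> z"
  show "csg_label T y \<noteq> csg_label T z"
  proof
    assume eq: "csg_label T y = csg_label T z"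
    obtain b where b: "b \<in> y" using node_ex n(2) by blast
    obtain c where c: "c \<in> z" using node_ex n(3) by blast
    have B: "col y = b v" "Img y = b ` T'" using node_rep[OF n(2) b] by auto
    have C: "col z = c v" "Img z = c ` T'" using node_rep[OF n(3) c] by auto
    have "label T b = label T c" using eq labs[OF n(2) b] labs[OF n(3) c] by simp
    then have l: "b v = c v" "label T' (b(v:=0)) = label T' (c(v:=0))" using label_split by auto
    have cyz: "col y = col z" using B C l by simp
    have lyz: "csg_label T' (P y) = csg_label T' (P z)" using labs[OF n(2) b] labs[OF n(3) c] l by simp
    have iyz: "Img y = Img z"
    proof -
      have "b ` T' = c ` T'"
      proof (rule image_cong[OF refl])
        fix t assume t: "t \<in> T'"
        then show "b t = c t" using labelT'_eq[OF l(2) t] t by simp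
      qed
      then show ?thesis using B C by simp
    qed
    have pyz: "P y \<noteq> P z"
    proof
      assume "P y = P z"
      then have "y = z" using F2[OF n(2) n(3)] cyz by simp
      then show False using h by simp
    qed
    show False
    proof (cases "P y = P x")
      case True
      then have "P z \<noteq> P x" using pyz by simp
      then have "\<not> Img z \<subseteq> Img x" using F7[OF n(1) n(3)] h by auto
      moreover have "Img x = Img y" using F6[OF n(1) n(2)] True by simp
      ultimately show False using iyz by simp
    next
      case False note pyx = False
      show False
      proof (cases "P z = P x")
        case True
        have "\<not> Img y \<subseteq> Img x" using F7[OF n(1) n(2)] h pyx by auto
        moreover have "Img x = Img z" using F6[OF n(1) n(3)] True by simp
        ultimately show False using iyz by simp
      next
        case False
        have "csg_adj V' (P x) (P y)" using F7[OF n(1) n(2)] h pyx by auto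
        moreover have "csg_adj V' (P x) (P z)" using F7[OF n(1) n(3)] h False by auto
        moreover have "P x \<in> NF" "P y \<in> NF" "P z \<in> NF" using F1 n by auto
        ultimately have "csg_label T' (P y) \<noteq> csg_label T' (P z)"
          using iF pyz unfolding inj_nbhd_def by blast
        then show False using lyz by simp
      qed
    qed
  qed
qed

end



theorem lemma8:
  fixes V :: "'a set" and E :: "'a set set" and T :: "'a set" and v :: 'a and k :: nat
  assumes "k \<ge> 3"
    and "sgraph V E"
    and "l_connected (k - 2) V E"
    and "colorable k V E"
    and "chordal V E"
    and "is_clique V E T"
    and "T \<noteq> V"
    and "introduces V E T v"
  shows "(color_complete (k - 2) k
             (csg_nodes k (V - {v}) {e \<in> E. v \<notin> e} (T - {v})) (csg_adj (V - {v}))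
             (csg_label (T - {v}))
          \<longrightarrow> color_complete (k - 1) k (csg_nodes k V E T) (csg_adj V) (csg_label T))
       \<and> ((card T = k \<or>
            (forest (csg_nodes k (V - {v}) {e \<in> E. v \<notin> e} (T - {v})) (csg_adj (V - {v})) \<and>
             inj_nbhd (csg_nodes k (V - {v}) {e \<in> E. v \<notin> e} (T - {v})) (csg_adj (V - {v}))
               (csg_label (T - {v}))))
          \<longrightarrow> forest (csg_nodes k V E T) (csg_adj V) \<and>
              inj_nbhd (csg_nodes k V E T) (csg_adj V) (csg_label T))"
proof -
  have vT: "v \<in> T" and nb: "neighbors V E v \<subseteq> T" using assms(8) by (auto simp: introduces_def)
  interpret L V E T v k using assms(2,6) vT nb assms(1) by unfold_locales
  have P1: "color_complete (k - 2) k NF (csg_adj V') (csg_label T')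
          \<longrightarrow> color_complete (k - 1) k NG (csg_adj V) (csg_label T)"
    using part1 assms(4) by blast
  have finT: "finite T" using finV TV finite_subset by blast
  have cTT': "card T = Suc (card T')" using card_Suc_Diff1[OF finT vT] by simp
  have P2: "forest NG (csg_adj V) \<and> inj_nbhd NG (csg_adj V) (csg_label T)"
    if hyp: "card T = k \<or> (forest NF (csg_adj V') \<and> inj_nbhd NF (csg_adj V') (csg_label T'))"
  proof (cases "card T = k")
    case True
    have ne: "\<not> csg_adj V x y" if "x \<in> NG" "y \<in> NG" for x y using noedge[OF True that] .
    have "forest NG (csg_adj V)" unfolding forest_def
    proof
      assume "\<exists>cs. distinct cs \<and> 3 \<le> length cs \<and> set cs \<subseteq> NG \<and>
          (\<forall>i<length cs. csg_adj V (cs ! i) (cs ! (Suc i mod length cs)))"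
      then obtain cs where cs: "3 \<le> length cs" "set cs \<subseteq> NG"
          "\<forall>i<length cs. csg_adj V (cs ! i) (cs ! (Suc i mod length cs))" by blast
      have "0 < length cs" using cs(1) by linarith
      then have "csg_adj V (cs ! 0) (cs ! (Suc 0 mod length cs))" using cs(3) by blast
      moreover have "cs ! 0 \<in> NG" "cs ! (Suc 0 mod length cs) \<in> NG"
        using cs(2) nth_mem \<open>0 < length cs\<close> mod_less_divisor by (blast, blast)
      ultimately show False using ne by blast
    qed
    moreover have "inj_nbhd NG (csg_adj V) (csg_label T)" unfolding inj_nbhd_def using ne by blast
    ultimately show ?thesis by blast
  next
    case False
    then have hyp2: "forest NF (csg_adj V')" "inj_nbhd NF (csg_adj V') (csg_label T')" using hyp by auto
    obtain \<alpha> where \<alpha>: "colG \<alpha>" using assms(4) by (auto simp: colorable_def)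
    have "inj_on \<alpha> T" using inj_T[OF \<alpha>] by (auto simp: inj_on_def)
    moreover have "\<alpha> ` T \<subseteq> {1..k}" using \<alpha> TV unfolding coloring_def by blast
    ultimately have "card T \<le> k" using card_image card_mono[of "{1..k}" "\<alpha> ` T"] by fastforce
    have vc: "vertex_cut V E T'"
      unfolding vertex_cut_def
    proof
      show "T' \<subseteq> V" using TV by blast
      obtain w where w: "w \<in> V" "w \<notin> T" using TV assms(7) by blast
      let ?W = "V - T'"
      let ?R = "\<lambda>x y. x \<in> ?W \<and> y \<in> ?W \<and> adj E x y"
      have "\<not> ?R\<^sup>*\<^sup>* v w"
      proof
        assume "?R\<^sup>*\<^sup>* v w"
        then show False
        proof (cases rule: converse_rtranclpE)
          case base then show False using w vT by simp
        next
          case (step y)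
          then have "y \<in> V" "y \<notin> T'" "adj E v y" by auto
          then have "y \<in> neighbors V E v" by (simp add: neighbors_def)
          then have "y \<in> T" using nb by blast
          then have "y = v" using \<open>y \<notin> T'\<close> by blast
          then show False using \<open>adj E v y\<close> noloop by simp
        qed
      qed
      moreover have "v \<in> ?W" "w \<in> ?W" using vV w by auto
      ultimately show "\<not> connected_on E ?W" unfolding connected_on_def by blast
    qed
    then have "card T' \<ge> k - 2" using assms(3) unfolding l_connected_def by blast
    then have cT': "card T' = k - 2" using \<open>card T \<le> k\<close> False cTT' assms(1) by linarith
    interpret L2 V E T v k using cT' by unfold_locales
    show ?thesis using H_forest[OF hyp2(1)] H_inj[OF hyp2(2)] by blast
  qed
  show ?thesis using P1 P2 by blast
qed



end
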